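(* For all positive integers $n,k$, $$WS^+(n+k) \geq S^+(k+1)\,WS^+(n).$$
   Context: A set $A \subseteq \mathbb{N}$ is sum-free if for all $(a,b)\in A^2$ (allowing $a=b$), $a+b \notin A$; it is weakly sum-free if for all $(a,b)\in A^2$ with $a\neq b$, $a+b\notin A$. An S-template with $m$ colors and width $p$ is a partition of $\{1,\dots,p\}$ into $m$ sum-free subsets $A_1,\dots,A_m$ such that for every $i\in\{1,\dots,m-1\}$ and all $(x,y)\in A_i^2$, $x+y>p$ implies $x+y-p\notin A_i$; $S^+(m)$ is the greatest width of an S-template with $m$ colors. For positive integers $a>b$, let $\pi(x) = (x \bmod a) + a\cdot \mathbb{1}_{\{0,\dots,b\}}(x \bmod a)$. For positive integers $a,m,b$ with $a>b$, a partition $(A_1,\dots,A_m)$ of $\{1,\dots,a+b\}$ is a $b$-WS-template with width $a$ and $m$ colors if: (i) every $A_i$ is weakly sum-free; (ii) every $A_i\setminus\{1,\dots,b\}$ is sum-free; (iii) for all $(x,y)\in A_m^2$, $x+y>b+2a$ implies $x+y-2a\notin A_m$; (iv) for all $i\in\{1,\dots,m-1\}$ and $(x,y)\in A_i^2$, $x+y>a+b$ implies $\pi(x+y)\notin A_i$. $WS^+_b(m)$ is the largest $a$ such that a $b$-WS-template with width $a$ and $m$ colors exists ($0$ if none), and $WS^+(m)=\max_{b\in\mathbb{N}^*} WS^+_b(m)$. *)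

theory Defs
  imports Main "HOL-Library.Extended_Nat"
begin

definition sum_free :: "nat set \<Rightarrow> bool" where
  "sum_free A \<longleftrightarrow> (\<forall>a\<in>A. \<forall>b\<in>A. a + b \<notin> A)"

definition weakly_sum_free :: "nat set \<Rightarrow> bool" where
  "weakly_sum_free A \<longleftrightarrow> (\<forall>a\<in>A. \<forall>b\<in>A. a \<noteq> b \<longrightarrow> a + b \<notin> A)"

definition is_partition :: "nat set \<Rightarrow> nat \<Rightarrow> (nat \<Rightarrow> nat set) \<Rightarrow> bool" where
  "is_partition S m A \<longleftrightarrow>
     (\<Union>i\<in>{1..m}. A i) = S \<and>
     (\<forall>i\<in>{1..m}. \<forall>j\<in>{1..m}. i \<noteq> j \<longrightarrow> A i \<inter> A j = {})"

definition S_template :: "nat \<Rightarrow> nat \<Rightarrow> (nat \<Rightarrow> nat set) \<Rightarrow> bool" where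
  "S_template m p A \<longleftrightarrow>
     is_partition {1..p} m A \<and>
     (\<forall>i\<in>{1..m}. sum_free (A i)) \<and>
     (\<forall>i\<in>{1..m-1}. \<forall>x\<in>A i. \<forall>y\<in>A i. x + y > p \<longrightarrow> x + y - p \<notin> A i)"

definition S_plus :: "nat \<Rightarrow> enat" where
  "S_plus m = Sup {enat p | p. \<exists>A. S_template m p A}"

definition pi_map :: "nat \<Rightarrow> nat \<Rightarrow> nat \<Rightarrow> nat" where
  "pi_map a b x = (x mod a) + (if x mod a \<in> {0..b} then a else 0)"

definition WS_template :: "nat \<Rightarrow> nat \<Rightarrow> nat \<Rightarrow> (nat \<Rightarrow> nat set) \<Rightarrow> bool" where
  "WS_template b a m A \<longleftrightarrow>
     0 < b \<and> b < a \<and> 0 < m \<and>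
     is_partition {1..a+b} m A \<and>
     (\<forall>i\<in>{1..m}. weakly_sum_free (A i)) \<and>
     (\<forall>i\<in>{1..m}. sum_free (A i - {1..b})) \<and>
     (\<forall>x\<in>A m. \<forall>y\<in>A m. x + y > b + 2 * a \<longrightarrow> x + y - 2 * a \<notin> A m) \<and>
     (\<forall>i\<in>{1..m-1}. \<forall>x\<in>A i. \<forall>y\<in>A i. x + y > a + b \<longrightarrow> pi_map a b (x + y) \<notin> A i)"

text \<open>Largest width (0 if none); valued in enat so no finiteness is presupposed.\<close>
definition WS_plus_b :: "nat \<Rightarrow> nat \<Rightarrow> enat" where
  "WS_plus_b b m = Sup {enat a | a. \<exists>A. WS_template b a m A}"

definition WS_plus :: "nat \<Rightarrow> enat" where
  "WS_plus m = (SUP b\<in>{b. 0 < b}. WS_plus_b b m)"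

end

theory Submission
  imports Defs
begin

definition rs :: "nat \<Rightarrow> nat \<Rightarrow> nat \<Rightarrow> nat" where
  "rs a b z = (if z \<le> b then z else (z - b - 1) mod a + b + 1)"
definition bk :: "nat \<Rightarrow> nat \<Rightarrow> nat \<Rightarrow> nat" where
  "bk a b z = (if z \<le> b then 0 else (z - b - 1) div a)"

lemma decomp: "z = a * bk a b z + rs a b z"
proof (cases "z \<le> b")
  case True then show ?thesis by (simp add: rs_def bk_def)
next
  case False
  have "(z-b-1) div a * a + (z-b-1) mod a = z-b-1" by (rule div_mult_mod_eq)
  then show ?thesis using False by (simp add: rs_def bk_def algebra_simps)
qed

lemma rs_le: assumes "b < a" shows "rs a b z \<le> a + b"
proof -
  have "\<And>t. t mod a < a" using assms by simp
  then show ?thesis unfolding rs_def using assms by (simp add: Suc_leI)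
qed

lemma rs_gt: "b < z \<Longrightarrow> b < rs a b z"
  by (simp add: rs_def)

lemma rs_small: "z \<le> b \<Longrightarrow> rs a b z = z \<and> bk a b z = 0"
  by (simp add: rs_def bk_def)

lemma rs_small2: "rs a b z \<le> b \<Longrightarrow> z \<le> b"
  using rs_gt by (metis not_le)

lemma rs_pos: "1 \<le> z \<Longrightarrow> 1 \<le> rs a b z"
  by (simp add: rs_def)

lemma uniq: assumes "b < a" "b < r" "r \<le> a + b" "z = a * j + r"
  shows "rs a b z = r \<and> bk a b z = j"
proof -
  have zb: "\<not> z \<le> b" using assms by simp
  have e: "z - b - 1 = (r - b - 1) + a * j" using assms by simp
  have m: "r - b - 1 < a" using assms by simp
  have "(z - b - 1) mod a = r - b - 1" unfolding e using m by simp
  moreover have "(z - b - 1) div a = j" unfolding e using m by simp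
  ultimately show ?thesis using zb assms by (simp add: rs_def bk_def)
qed

lemma pi_rs: assumes "b < a" "b < w" shows "pi_map a b w = rs a b w"
proof -
  define m where "m = w mod a"
  define q where "q = w div a"
  have w: "w = a * q + m" unfolding m_def q_def by simp
  have ma: "m < a" unfolding m_def using assms by simp
  show ?thesis
  proof (cases "m \<le> b")
    case True
    then have "q \<ge> 1" using w assms by (cases q) auto
    then have "w = a * (q - 1) + (m + a)" using w by (cases q) (auto simp: algebra_simps)
    then have "rs a b w = m + a" using uniq[of b a "m+a" w "q-1"] assms True by simp
    then show ?thesis using True unfolding pi_map_def m_def by simp
  next
    case False
    then have "rs a b w = m" using uniq[of b a m w q] assms w ma by simp
    then show ?thesis using False unfolding pi_map_def m_def by simp
  qed
qed

lemma sum_rs: assumes "b < a" "1 \<le> x" "1 \<le> y"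
  shows "rs a b (x+y) = rs a b (rs a b x + rs a b y) \<and>
         bk a b (x+y) = bk a b x + bk a b y + bk a b (rs a b x + rs a b y)"
proof -
  define s where "s = rs a b x + rs a b y"
  have dx: "x = a * bk a b x + rs a b x" by (rule decomp)
  have dy: "y = a * bk a b y + rs a b y" by (rule decomp)
  have ds: "s = a * bk a b s + rs a b s" by (rule decomp)
  show ?thesis
  proof (cases "rs a b s \<le> b")
    case True
    then have "s \<le> b" by (rule rs_small2)
    then have "rs a b x \<le> b" "rs a b y \<le> b" unfolding s_def by auto
    then have "x \<le> b" "y \<le> b" using rs_small2 by auto
    then show ?thesis using rs_small \<open>s \<le> b\<close> unfolding s_def
      by (metis add_le_mono le_refl add_0 rs_small)
  next
    case False
    have "x + y = a * (bk a b x + bk a b y + bk a b s) + rs a b s"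
      using dx dy ds unfolding s_def by (simp add: algebra_simps)
    then show ?thesis using uniq[of b a "rs a b s" "x+y"] False rs_le[OF assms(1)] assms
      unfolding s_def by simp
  qed
qed

lemma bk_lt: assumes "b < a" "1 \<le> p" "z \<le> p * a + b" shows "bk a b z < p"
proof (cases "z \<le> b")
  case True then show ?thesis using rs_small assms by simp
next
  case False
  have d: "z = a * bk a b z + rs a b z" by (rule decomp)
  have "b < rs a b z" using False rs_gt by simp
  show ?thesis
  proof (rule ccontr)
    assume "\<not> ?thesis"
    then have "p * a \<le> a * bk a b z" by (simp add: mult_le_mono2 mult.commute)
    then show False using d \<open>b < rs a b z\<close> assms(3) by linarith
  qed
qed


definition Cc :: "nat \<Rightarrow> nat \<Rightarrow> nat \<Rightarrow> nat \<Rightarrow> (nat \<Rightarrow> nat set) \<Rightarrow> (nat \<Rightarrow> nat set) \<Rightarrow> nat \<Rightarrow> nat set" where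
  "Cc a b n p A B i = {z. 1 \<le> z \<and> z \<le> p*a+b \<and>
     (if i < n then rs a b z \<in> A i else rs a b z \<in> A n \<and> bk a b z + 1 \<in> B (i + 1 - n))}"

context
  fixes a b n k p :: nat and A B :: "nat \<Rightarrow> nat set"
  assumes S: "S_template (k+1) p B" and W: "WS_template b a n A" and kpos: "0<k" and ppos: "0<p"
begin

lemma ba: "b < a" "0 < b" "0 < n" using W unfolding WS_template_def by auto

lemma A_sub: "i \<in> {1..n} \<Longrightarrow> A i \<subseteq> {1..a+b}"
  using W unfolding WS_template_def is_partition_def by blast
lemma A_cover: "r \<in> {1..a+b} \<Longrightarrow> \<exists>c\<in>{1..n}. r \<in> A c"
  using W unfolding WS_template_def is_partition_def by blast
lemma A_disj: "i \<in> {1..n} \<Longrightarrow> j \<in> {1..n} \<Longrightarrow> i \<noteq> j \<Longrightarrow> r \<in> A i \<Longrightarrow> r \<notin> A j"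
  using W unfolding WS_template_def is_partition_def by blast
lemma B_sub: "i \<in> {1..k+1} \<Longrightarrow> B i \<subseteq> {1..p}"
  using S unfolding S_template_def is_partition_def by blast
lemma B_cover: "r \<in> {1..p} \<Longrightarrow> \<exists>c\<in>{1..k+1}. r \<in> B c"
  using S unfolding S_template_def is_partition_def by blast
lemma B_disj: "i \<in> {1..k+1} \<Longrightarrow> j \<in> {1..k+1} \<Longrightarrow> i \<noteq> j \<Longrightarrow> r \<in> B i \<Longrightarrow> r \<notin> B j"
  using S unfolding S_template_def is_partition_def by blast
lemma B_sf: "l \<in> {1..k+1} \<Longrightarrow> u \<in> B l \<Longrightarrow> v \<in> B l \<Longrightarrow> u + v \<notin> B l"
  using S unfolding S_template_def sum_free_def by blast
lemma B_mod: "l \<in> {1..k} \<Longrightarrow> u \<in> B l \<Longrightarrow> v \<in> B l \<Longrightarrow> u + v > p \<Longrightarrow> u + v - p \<notin> B l"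
  using S unfolding S_template_def by auto

lemma Acore: assumes "c \<in> {1..n}" "r \<in> A c" "r' \<in> A c" "r \<noteq> r' \<or> b < r" "r + r' \<le> a + b"
  shows "r + r' \<notin> A c"
proof
  assume h: "r + r' \<in> A c"
  show False
  proof (cases "r \<noteq> r'")
    case True
    then show False using W assms h unfolding WS_template_def weakly_sum_free_def by blast
  next
    case False
    then have "b < r" "b < r'" using assms by auto
    then have "r \<in> A c - {1..b}" "r' \<in> A c - {1..b}" "r + r' \<in> A c - {1..b}" using assms h by auto
    then show False using W assms unfolding WS_template_def sum_free_def by blast
  qed
qed

lemma Api: assumes "c \<in> {1..n-1}" "r \<in> A c" "r' \<in> A c" "r + r' > a + b"
  shows "rs a b (r + r') \<notin> A c"
proof -
  have "pi_map a b (r + r') \<notin> A c" using W assms unfolding WS_template_def by blast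
  moreover have "pi_map a b (r + r') = rs a b (r + r')" using pi_rs ba assms(4) by simp
  ultimately show ?thesis by simp
qed

lemma An: assumes "r \<in> A n" "r' \<in> A n" "r + r' > b + 2 * a"
  shows "r + r' - 2 * a \<notin> A n"
  using W assms unfolding WS_template_def by blast

lemma s1: assumes "s \<le> a + b" shows "rs a b s = s \<and> bk a b s = 0"
proof (cases "s \<le> b")
  case True then show ?thesis by (rule rs_small)
next
  case False then show ?thesis using uniq[of b a s s 0] ba assms by simp
qed

lemma s2: assumes "a + b < s" "s \<le> 2*a + b" shows "rs a b s = s - a \<and> bk a b s = 1"
  using uniq[of b a "s-a" s 1] ba assms by simp

lemma s3: assumes "2*a + b < s" "s \<le> 2*a + 2*b" shows "rs a b s = s - 2*a \<and> bk a b s = 2"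
  using uniq[of b a "s-2*a" s 2] ba assms by simp

lemma pa_gt: "b < p*a"
proof -
  have "1*a \<le> p*a" using ppos by (intro mult_le_mono1) simp
  then have "a \<le> p*a" by simp
  then show ?thesis using ba by linarith
qed

lemma Cmem: "z \<in> Cc a b n p A B i \<longleftrightarrow> 1 \<le> z \<and> z \<le> p*a+b \<and>
     (if i < n then rs a b z \<in> A i else rs a b z \<in> A n \<and> bk a b z + 1 \<in> B (i + 1 - n))"
  unfolding Cc_def by simp

lemma cin: "i \<in> {1..n+k} \<Longrightarrow> (if i < n then i else n) \<in> {1..n}"
  using ba by auto

lemma rsA: "z \<in> Cc a b n p A B i \<Longrightarrow> rs a b z \<in> A (if i < n then i else n)"
  unfolding Cmem by (auto split: if_splits)

lemma rs_range: "1 \<le> z \<Longrightarrow> rs a b z \<in> {1..a+b}"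
  using rs_pos rs_le ba by auto

lemma rr_ne: assumes "x \<noteq> y \<or> b < x" "1 \<le> x" "1 \<le> y"
  shows "rs a b x \<noteq> rs a b y \<or> b < rs a b x"
proof (cases "b < x")
  case True then show ?thesis using rs_gt by simp
next
  case False
  then have "x \<noteq> y" using assms by simp
  show ?thesis
  proof (rule ccontr)
    assume "\<not> ?thesis"
    then have e: "rs a b x = rs a b y" "rs a b x \<le> b" by auto
    then have "rs a b y \<le> b" by simp
    then have "y \<le> b" by (rule rs_small2)
    then show False using e False rs_small \<open>x \<noteq> y\<close> by (metis not_le)
  qed
qed


lemma sumC: assumes i: "i \<in> {1..n+k}" and x: "x \<in> Cc a b n p A B i" and y: "y \<in> Cc a b n p A B i"
  and ne: "x \<noteq> y \<or> b < x" and xy: "x + y \<in> Cc a b n p A B i"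
  shows False
proof -
  define c where "c = (if i < n then i else n)"
  have c: "c \<in> {1..n}" using cin[OF i] c_def by simp
  have x1: "1 \<le> x" "1 \<le> y" using x y Cmem by auto
  define r where "r = rs a b x"
  define r' where "r' = rs a b y"
  define s where "s = r + r'"
  have rA: "r \<in> A c" "r' \<in> A c" using rsA x y unfolding r_def r'_def c_def by auto
  have rr: "r \<noteq> r' \<or> b < r" using rr_ne[OF ne x1] unfolding r_def r'_def .
  have rle: "r \<le> a + b" "r' \<le> a + b" using rs_le ba unfolding r_def r'_def by auto
  have sr: "rs a b (x+y) = rs a b s" "bk a b (x+y) = bk a b x + bk a b y + bk a b s"
    using sum_rs[OF ba(1) x1] unfolding s_def r_def r'_def by auto
  have sA: "rs a b s \<in> A c" using rsA[OF xy] sr unfolding c_def by simp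
  show False
  proof (cases "s \<le> a + b")
    case True
    then show False using Acore[OF c rA rr] s1[OF True] sA unfolding s_def by simp
  next
    case sgt: False
    show False
    proof (cases "i < n")
      case True
      then have "c \<in> {1..n-1}" using c c_def by auto
      then show False using Api[OF _ rA] sgt sA unfolding s_def by simp
    next
      case iN: False
      then have cn: "c = n" using c_def by simp
      show False
      proof (cases "s > 2*a+b")
        case True
        then show False using An rA s3[OF True] sA rle unfolding cn s_def by simp
      next
        case False
        then have b1: "bk a b s = 1" using s2 sgt by simp
        define l where "l = i + 1 - n"
        have l: "l \<in> {1..k+1}" using i iN unfolding l_def by auto
        have "bk a b x + 1 \<in> B l" "bk a b y + 1 \<in> B l" "bk a b (x+y) + 1 \<in> B l"
          using x y xy iN unfolding Cmem l_def by auto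
        then show False using B_sf[OF l] sr b1
          by (metis add.commute add.left_commute one_add_one add.assoc)
      qed
    qed
  qed
qed

lemma iiiC: assumes x: "x \<in> Cc a b n p A B (n+k)" and y: "y \<in> Cc a b n p A B (n+k)"
  and gt: "x + y > b + 2 * (p*a)"
  shows "x + y - 2 * (p*a) \<notin> Cc a b n p A B (n+k)"
proof
  assume z: "x + y - 2 * (p*a) \<in> Cc a b n p A B (n+k)"
  define z where "z = x + y - 2 * (p*a)"
  have x1: "1 \<le> x" "1 \<le> y" "x \<le> p*a+b" "y \<le> p*a+b" using x y Cmem by auto
  have zb: "b < z" "z \<le> 2*b" using gt x1 unfolding z_def by auto
  then have za: "z \<le> a + b" using ba by simp
  have e: "x + y = a * (2*p) + z" using gt unfolding z_def by simp
  have u: "rs a b (x+y) = z" "bk a b (x+y) = 2*p" using uniq[OF ba(1) zb(1) za e] by auto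
  have rz: "rs a b z = z" using uniq[of b a z z 0] ba zb za by simp
  define r where "r = rs a b x"
  define r' where "r' = rs a b y"
  define s where "s = r + r'"
  have rA: "r \<in> A n" "r' \<in> A n" using rsA[OF x] rsA[OF y] unfolding r_def r'_def by auto
  have rle: "r \<le> a + b" "r' \<le> a + b" using rs_le ba unfolding r_def r'_def by auto
  have sr: "rs a b (x+y) = rs a b s" "bk a b (x+y) = bk a b x + bk a b y + bk a b s"
    using sum_rs[OF ba(1) x1(1,2)] unfolding s_def r_def r'_def by auto
  have bl: "bk a b x < p" "bk a b y < p" using bk_lt ba ppos x1 by auto
  have "bk a b s \<ge> 2" using sr u bl by linarith
  then have "s > 2*a+b" using s1 s2 by (metis not_le le_add1 numeral_le_one_iff semiring_norm(69) order.trans one_le_numeral zero_less_numeral not_less)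
  then have "rs a b s = s - 2*a" using s3 rle unfolding s_def by simp
  moreover have "z \<in> A n" using rsA[OF z] rz kpos unfolding z_def by simp
  ultimately show False using An[OF rA] \<open>s > 2*a+b\<close> u sr unfolding s_def by simp
qed


lemma ivC: assumes i: "i \<in> {1..n+k-1}" and x: "x \<in> Cc a b n p A B i" and y: "y \<in> Cc a b n p A B i"
  and gt: "x + y > p*a + b"
  shows "pi_map (p*a) b (x + y) \<notin> Cc a b n p A B i"
proof
  assume w: "pi_map (p*a) b (x + y) \<in> Cc a b n p A B i"
  define w where "w = pi_map (p*a) b (x + y)"
  have pab: "b < p*a" using pa_gt by simp
  have x1: "1 \<le> x" "1 \<le> y" "x \<le> p*a+b" "y \<le> p*a+b" using x y Cmem by auto
  have wr: "w = rs (p*a) b (x+y)" unfolding w_def using pi_rs[OF pab] gt by simp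
  define t where "t = bk (p*a) b (x+y)"
  have dxy: "x + y = (p*a) * t + w" unfolding wr t_def by (rule decomp)
  have wb: "b < w" unfolding wr using rs_gt gt by simp
  have wle: "w \<le> p*a+b" using w Cmem unfolding w_def by simp
  have t1: "t \<ge> 1" using dxy gt wle by (cases t) auto
  have dw: "w = a * bk a b w + rs a b w" by (rule decomp)
  have e: "x + y = a * (p*t + bk a b w) + rs a b w" using dxy dw by (simp add: algebra_simps)
  have u: "rs a b (x+y) = rs a b w" "bk a b (x+y) = p*t + bk a b w"
    using uniq[OF ba(1) rs_gt[OF wb] rs_le[OF ba(1)] e] by auto
  have ne: "x \<noteq> y \<or> b < x" using gt pa_gt by auto
  have i': "i \<in> {1..n+k}" using i by auto
  define c where "c = (if i < n then i else n)"
  have c: "c \<in> {1..n}" using cin[OF i'] c_def by simp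
  define r where "r = rs a b x"
  define r' where "r' = rs a b y"
  define s where "s = r + r'"
  have rA: "r \<in> A c" "r' \<in> A c" using rsA x y unfolding r_def r'_def c_def by auto
  have rr: "r \<noteq> r' \<or> b < r" using rr_ne[OF ne x1(1,2)] unfolding r_def r'_def .
  have rle: "r \<le> a + b" "r' \<le> a + b" using rs_le ba unfolding r_def r'_def by auto
  have sr: "rs a b (x+y) = rs a b s" "bk a b (x+y) = bk a b x + bk a b y + bk a b s"
    using sum_rs[OF ba(1) x1(1,2)] unfolding s_def r_def r'_def by auto
  have sA: "rs a b s \<in> A c" using rsA[OF w] sr u unfolding c_def w_def by simp
  show False
  proof (cases "s \<le> a + b")
    case True
    then show False using Acore[OF c rA rr] s1[OF True] sA unfolding s_def by simp
  next
    case sgt: False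
    show False
    proof (cases "i < n")
      case True
      then have "c \<in> {1..n-1}" using c c_def by auto
      then show False using Api[OF _ rA] sgt sA unfolding s_def by simp
    next
      case iN: False
      then have cn: "c = n" using c_def by simp
      show False
      proof (cases "s > 2*a+b")
        case True
        then show False using An rA s3[OF True] sA rle unfolding cn s_def by simp
      next
        case False
        then have b1: "bk a b s = 1" using s2 sgt by simp
        define l where "l = i + 1 - n"
        have l: "l \<in> {1..k}" using i iN unfolding l_def by auto
        have bl: "bk a b x < p" "bk a b y < p" using bk_lt ba ppos x1 by auto
        have eq: "p*t + bk a b w = bk a b x + bk a b y + 1" using u sr b1 by simp
        have tt: "t = 1"
        proof (rule ccontr)
          assume "t \<noteq> 1"
          then have "t \<ge> 2" using t1 by simp
          then have "p*t \<ge> p*2" by (rule mult_le_mono2)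
          then show False using eq bl by linarith
        qed
        have m: "bk a b x + 1 \<in> B l" "bk a b y + 1 \<in> B l" "bk a b w + 1 \<in> B l"
          using x y w iN unfolding Cmem l_def w_def by auto
        have "(bk a b x + 1) + (bk a b y + 1) > p" "(bk a b x + 1) + (bk a b y + 1) - p = bk a b w + 1"
          using eq tt by auto
        then show False using B_mod[OF l m(1,2)] m(3) by simp
      qed
    qed
  qed
qed

lemma partC: "is_partition {1..p*a+b} (n+k) (Cc a b n p A B)"
  unfolding is_partition_def
proof (intro conjI ballI impI)
  show "(\<Union>i\<in>{1..n+k}. Cc a b n p A B i) = {1..p*a+b}"
  proof
    show "(\<Union>i\<in>{1..n+k}. Cc a b n p A B i) \<subseteq> {1..p*a+b}" using Cmem by auto
  next
    show "{1..p*a+b} \<subseteq> (\<Union>i\<in>{1..n+k}. Cc a b n p A B i)"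
    proof
      fix z assume z: "z \<in> {1..p*a+b}"
      have "rs a b z \<in> {1..a+b}" using rs_range z by auto
      then obtain c where c: "c \<in> {1..n}" "rs a b z \<in> A c" using A_cover by blast
      show "z \<in> (\<Union>i\<in>{1..n+k}. Cc a b n p A B i)"
      proof (cases "c < n")
        case True
        then have "z \<in> Cc a b n p A B c" using z c Cmem by auto
        then show ?thesis using c by auto
      next
        case False
        then have cn: "c = n" using c by auto
        have "bk a b z < p" using bk_lt ba ppos z by auto
        then have "bk a b z + 1 \<in> {1..p}" by simp
        then obtain l where l: "l \<in> {1..k+1}" "bk a b z + 1 \<in> B l" using B_cover by blast
        have "z \<in> Cc a b n p A B (n + l - 1)" using z c cn l Cmem by auto
        moreover have "n + l - 1 \<in> {1..n+k}" using l ba by auto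
        ultimately show ?thesis by blast
      qed
    qed
  qed
next
  fix i j assume i: "i \<in> {1..n+k}" and j: "j \<in> {1..n+k}" and ij: "i \<noteq> j"
  show "Cc a b n p A B i \<inter> Cc a b n p A B j = {}"
  proof (rule ccontr)
    assume "\<not> ?thesis"
    then obtain z where zi: "z \<in> Cc a b n p A B i" and zj: "z \<in> Cc a b n p A B j" by blast
    show False
    proof (cases "i < n \<or> j < n")
      case True
      have ri: "rs a b z \<in> A (if i < n then i else n)" using rsA[OF zi] .
      have rj: "rs a b z \<in> A (if j < n then j else n)" using rsA[OF zj] .
      have "(if i < n then i else n) \<noteq> (if j < n then j else n)" using True ij by auto
      then show False using A_disj[OF cin[OF i] cin[OF j] _ ri] rj by blast
    next
      case False
      then have "i + 1 - n \<noteq> j + 1 - n" "i + 1 - n \<in> {1..k+1}" "j + 1 - n \<in> {1..k+1}"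
        using i j ij by auto
      then show False using zi zj B_disj False unfolding Cmem by auto
    qed
  qed
qed

lemma templC: "WS_template b (p*a) (n+k) (Cc a b n p A B)"
  unfolding WS_template_def
proof (intro conjI ballI impI)
  show "0 < b" using ba by simp
  show "b < p*a" using pa_gt by simp
  show "0 < n + k" using kpos by simp
  show "is_partition {1..p*a+b} (n+k) (Cc a b n p A B)" by (rule partC)
next
  fix i assume i: "i \<in> {1..n+k}"
  show "weakly_sum_free (Cc a b n p A B i)" unfolding weakly_sum_free_def
    using sumC[OF i] by blast
  show "sum_free (Cc a b n p A B i - {1..b})" unfolding sum_free_def
  proof (intro ballI)
    fix u v assume u: "u \<in> Cc a b n p A B i - {1..b}" and v: "v \<in> Cc a b n p A B i - {1..b}"
    have "b < u" using u Cmem by auto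
    then show "u + v \<notin> Cc a b n p A B i - {1..b}" using sumC[OF i, of u v] u v by blast
  qed
next
  fix x y assume "x \<in> Cc a b n p A B (n+k)" "y \<in> Cc a b n p A B (n+k)" "b + 2 * (p*a) < x + y"
  then show "x + y - 2 * (p*a) \<notin> Cc a b n p A B (n+k)" by (rule iiiC)
next
  fix i x y assume "i \<in> {1..n+k-1}" "x \<in> Cc a b n p A B i" "y \<in> Cc a b n p A B i" "p*a + b < x + y"
  then show "pi_map (p*a) b (x + y) \<notin> Cc a b n p A B i" by (rule ivC)
qed

end

lemma key: assumes S: "S_template (k+1) p B" and W: "WS_template b a n A" and k: "0<k"
  shows "enat (p*a) \<le> WS_plus (n+k)"
proof (cases "p = 0")
  case True then show ?thesis by (simp add: zero_enat_def[symmetric])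
next
  case False
  then have T: "WS_template b (p*a) (n+k) (Cc a b n p A B)" using templC[OF S W k] by simp
  have b: "0 < b" using W unfolding WS_template_def by simp
  have "enat (p*a) \<le> WS_plus_b b (n+k)" unfolding WS_plus_b_def
    using T by (intro Sup_upper) blast
  also have "\<dots> \<le> WS_plus (n+k)" unfolding WS_plus_def using b by (intro SUP_upper) simp
  finally show ?thesis .
qed

lemma Sup_zero: assumes "P \<subseteq> {0}" shows "Sup (enat ` P) = 0"
proof -
  have "Sup (enat ` P) \<le> 0" using assms by (intro Sup_least) (auto simp: zero_enat_def)
  then show ?thesis by simp
qed

lemma Sup_max: assumes "finite P" "P \<noteq> {}" shows "Sup (enat ` P) \<le> enat (Max P)"
  using assms by (intro Sup_least) auto

lemma Sup_mult_le: fixes P Q :: "nat set"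
  assumes H: "\<And>p q. p \<in> P \<Longrightarrow> q \<in> Q \<Longrightarrow> enat (p*q) \<le> R"
  shows "Sup (enat ` P) * Sup (enat ` Q) \<le> R"
proof (cases R)
  case infinity then show ?thesis by simp
next
  case (enat r)
  show ?thesis
  proof (cases "P \<subseteq> {0}")
    case True then show ?thesis using Sup_zero by simp
  next
    case F1: False
    show ?thesis
    proof (cases "Q \<subseteq> {0}")
      case True then show ?thesis using Sup_zero by simp
    next
      case False
      obtain p0 where p0: "p0 \<in> P" "p0 > 0" using F1 by auto
      obtain q0 where q0: "q0 \<in> Q" "q0 > 0" using False by auto
      have bq: "q \<le> r" if "q \<in> Q" for q
      proof -
        have "p0 * q \<le> r" using H[OF p0(1) that] enat by simp
        moreover have "q \<le> p0 * q" using p0 by simp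
        ultimately show ?thesis by linarith
      qed
      have bp: "p \<le> r" if "p \<in> P" for p
      proof -
        have "p * q0 \<le> r" using H[OF that q0(1)] enat by simp
        moreover have "p \<le> p * q0" using q0 by simp
        ultimately show ?thesis by linarith
      qed
      have fP: "finite P" using bp finite_nat_set_iff_bounded_le by blast
      have fQ: "finite Q" using bq finite_nat_set_iff_bounded_le by blast
      have "Sup (enat ` P) * Sup (enat ` Q) \<le> enat (Max P) * enat (Max Q)"
        using Sup_max[OF fP] Sup_max[OF fQ] p0 q0 by (intro mult_mono) auto
      also have "\<dots> = enat (Max P * Max Q)" by simp
      also have "\<dots> \<le> R"
      proof -
        have "P \<noteq> {}" "Q \<noteq> {}" using p0 q0 by auto
        then show ?thesis using H[OF Max_in[OF fP] Max_in[OF fQ]] by simp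
      qed
      finally show ?thesis .
    qed
  qed
qed

theorem corollary3p22:
  fixes n k :: nat
  assumes "0 < n" and "0 < k"
  shows "WS_plus (n + k) \<ge> S_plus (k + 1) * WS_plus n"
proof -
  define P where "P = {p. \<exists>B. S_template (k+1) p B}"
  define Q where "Q = {a. \<exists>b A. 0 < b \<and> WS_template b a n A}"
  have e1: "S_plus (k+1) = Sup (enat ` P)" unfolding S_plus_def P_def
    by (rule arg_cong[where f=Sup]) blast
  have e2: "WS_plus n = Sup (enat ` Q)"
  proof (rule antisym)
    show "WS_plus n \<le> Sup (enat ` Q)" unfolding WS_plus_def WS_plus_b_def
      by (intro SUP_least Sup_least) (auto simp: Q_def intro!: Sup_upper)
  next
    show "Sup (enat ` Q) \<le> WS_plus n"
    proof (intro Sup_least)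
      fix x assume "x \<in> enat ` Q"
      then obtain a b A where x: "x = enat a" "0 < b" "WS_template b a n A" unfolding Q_def by blast
      have "x \<le> WS_plus_b b n" unfolding WS_plus_b_def using x by (intro Sup_upper) blast
      also have "\<dots> \<le> WS_plus n" unfolding WS_plus_def using x by (intro SUP_upper) simp
      finally show "x \<le> WS_plus n" .
    qed
  qed
  have "Sup (enat ` P) * Sup (enat ` Q) \<le> WS_plus (n+k)"
  proof (rule Sup_mult_le)
    fix p q assume "p \<in> P" "q \<in> Q"
    then obtain B b A where "S_template (k+1) p B" "WS_template b q n A" unfolding P_def Q_def by blast
    then show "enat (p*q) \<le> WS_plus (n+k)" using key assms(2) by blast
  qed
  then show ?thesis using e1 e2 by simp
qed

end
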